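(* Let $t$ be a closed $\Sigma'$-term, $\phi$ a dAEL sentence over $\Sigma$, $\mathcal B$ a universally consistent (consistent) distributed belief pair, and $J$ a $\Sigma'$-structure. Then $\tau_{\mathit{formula}}(t,\phi)^{\tau_{\mathit{beliefpair}}(\mathcal B),J}=\phi^{\mathcal B,J_t}$.
   Context: Standing setup (dAEL). $\Sigma=\Sigma_o\uplus\Sigma_s$ is a first-order vocabulary (objective and subjective symbols). A nonempty domain $D$ and a $\Sigma_o$-structure $I_o$ with domain $D$ are fixed, as is a set of agents $\mathcal{A}\subseteq D$. For each $A\in\mathcal{A}$ there is a constant $A\in\Sigma_o$ with $A^{I_o}=A$, and $\Sigma_o$ contains a unary predicate $\mathrm{Apred}$ with $\mathrm{Apred}^{I_o}=\mathcal{A}$. "Structure" means a $\Sigma$-structure with domain $D$ that agrees with $I_o$ on $\Sigma_o$. Formulas of dAEL are built from atoms $P(\bar t)$ ($P\in\Sigma$ or equality) using $\wedge,\neg,\forall x$, and the modal rule: if $\varphi$ is a formula and $t$ a term then $K_t\varphi$ is a formula. Truth values are $\mathbf t,\mathbf f,\mathbf u$ with truth order $\mathbf f<_t\mathbf u<_t\mathbf t$; $\mathbf t^{-1}=\mathbf f$, $\mathbf f^{-1}=\mathbf t$, $\mathbf u^{-1}=\mathbf u$. A possible world structure (PWS) is a set of structures. A distributed possible world structure (DPWS) is a family $\mathcal Q=(\mathcal Q_A)_{A\in\mathcal A}$ of PWSs. A distributed belief pair (DBP) is a pair $\mathcal B=(\mathcal B^c,\mathcal B^l)$ of DPWSs,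 consistent if $\mathcal B^l_A\subseteq\mathcal B^c_A$ for all $A$. A DPWS $\mathcal Q$ is universally consistent if $\mathcal Q_A\ne\emptyset$ for all $A$; a DBP $\mathcal B$ is universally consistent if $\mathcal B^l$ is. Three-valued value $\varphi^{\mathcal B,I,a}$: atoms get their two-valued value in $I$; $\neg$ by ${}^{-1}$, $\wedge$ and $\forall$ by $\le_t$-glb (Kleene); $(K_t\varphi)^{\mathcal B,I,a}$ is $\mathbf t$ if $t^{I,a}\in\mathcal A$ and $\varphi^{\mathcal B,J,a}=\mathbf t$ for all $J\in\mathcal B^c_{t^{I,a}}$; $\mathbf f$ if $t^{I,a}\notin\mathcal A$ or $\varphi^{\mathcal B,J,a}=\mathbf f$ for some $J\in\mathcal B^l_{t^{I,a}}$; $\mathbf u$ otherwise; for sentences the assignment is omitted. Translation to AEL. $\Sigma'$ consists of all symbols of $\Sigma_o$ and all symbols of $\Sigma_s$ with arity increased by one. A fixed element $\delta\in D$ is chosen. A $\Sigma'$-structure always has domain $D$, agrees with $I_o$ on $\Sigma_o$, and is normal: for every $f\in\Sigma_s$, $f^J(\bar d,d)=\delta$ whenever $d\notin\mathcal A$, and for every relation $R\in\Sigma_s$, $(\bar d,d)\notin R^J$ whenever $d\notin\mathcal A$. AEL formulas over $\Sigma'$ are built like dAEL formulas but with a single unindexed modal operator $K$; an AEL belief pair is a pair $(P,S)$ of sets of $\Sigma'$-structures, and the three-valued AEL value is defined like the dAEL one except that $(K\varphi)^{(P,S),J,a}$ is $\mathbf t$ if $\varphi$ has value $\mathbf t$ at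 all $J'\in P$, $\mathbf f$ if it has value $\mathbf f$ at some $J'\in S$, and $\mathbf u$ otherwise. For a $\Sigma$-term $t$ and $\Sigma'$-term $s$, $t_s$ is defined by $x_s=x$ for variables, $f(t_1,\dots,t_n)_s=f((t_1)_s,\dots,(t_n)_s,s)$ for $f\in\Sigma_s$, $f(t_1,\dots,t_n)_s=f((t_1)_s,\dots,(t_n)_s)$ for $f\in\Sigma_o$. $\tau_{\mathit{formula}}(s,\cdot)$: $P(t_1,\dots,t_n)\mapsto P((t_1)_s,\dots,(t_n)_s,s)$ if $P\in\Sigma_s$, $P((t_1)_s,\dots,(t_n)_s)$ if $P\in\Sigma_o$ or equality; commutes with $\neg,\wedge,\forall x$; $\tau_{\mathit{formula}}(s,K_t\phi)=\exists x(x=t_s\wedge\mathrm{Apred}(x)\wedge K\,\tau_{\mathit{formula}}(x,\phi))$ for a fresh variable $x$. For a family $(I_A)_{A\in\mathcal A}$ of structures, $\tau_{\mathit{structure}}((I_A)_A)$ is the $\Sigma'$-structure interpreting $\Sigma_o$ as $I_o$, each $f\in\Sigma_s$ by $f(\bar d,d)=f^{I_d}(\bar d)$ if $d\in\mathcal A$ and $\delta$ otherwise, and each relation $R\in\Sigma_s$ by $(\bar d,d)\in R$ iff $d\in\mathcal A$ and $\bar d\in R^{I_d}$. $\tau_{\mathit{pws}}(\mathcal Q)=\{\tau_{\mathit{structure}}((I_A)_A): I_A\in\mathcal Q_A\text{ for all }A\in\mathcal A\}$, and $\tau_{\mathit{beliefpair}}(\mathcal B)=(\tau_{\mathit{pws}}(\mathcal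 B^c),\tau_{\mathit{pws}}(\mathcal B^l))$. For a $\Sigma'$-structure $J$ and a closed $\Sigma'$-term $t$, $J_t$ is the $\Sigma$-structure with domain $D$ that interprets $\Sigma_o$ as $J$ does and each $s\in\Sigma_s$ by $s^{J_t}(d_1,\dots,d_n)=s^J(d_1,\dots,d_n,t^J)$ (for relation symbols: $\bar d\in s^{J_t}$ iff $(\bar d,t^J)\in s^J$). *)

theory Defs
  imports Main
begin

text \<open>Terms over function symbols of type 'f; variables are natural numbers.
  Arities are not tracked: a structure interprets a function symbol on argument lists
  of every length.\<close>

datatype 'f trm = Var nat | Fn 'f "'f trm list"

datatype ('f, 'r) dfm =
    DAtom 'r "'f trm list"
  | DEq "'f trm" "'f trm"
  | DNeg "('f, 'r) dfm"
  | DConj "('f, 'r) dfm" "('f, 'r) dfm"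
  | DAll nat "('f, 'r) dfm"
  | DK "'f trm" "('f, 'r) dfm"

text \<open>AEL formulas over Sigma' (same symbol names; subjective symbols get one more argument).\<close>
datatype ('f, 'r) afm =
    AAtom 'r "'f trm list"
  | AEq "'f trm" "'f trm"
  | ANeg "('f, 'r) afm"
  | AConj "('f, 'r) afm" "('f, 'r) afm"
  | AAll nat "('f, 'r) afm"
  | AK "('f, 'r) afm"

definition AEx :: "nat \<Rightarrow> ('f, 'r) afm \<Rightarrow> ('f, 'r) afm" where
  "AEx x \<phi> = ANeg (AAll x (ANeg \<phi>))"

fun varsT :: "'f trm \<Rightarrow> nat set" where
  "varsT (Var n) = {n}"
| "varsT (Fn f ts) = \<Union> (set (map varsT ts))"

fun maxvarT :: "'f trm \<Rightarrow> nat" where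
  "maxvarT (Var n) = n"
| "maxvarT (Fn f ts) = foldr max (map maxvarT ts) 0"

primrec freeF :: "('f, 'r) dfm \<Rightarrow> nat set" where
  "freeF (DAtom r ts) = \<Union> (set (map varsT ts))"
| "freeF (DEq t1 t2) = varsT t1 \<union> varsT t2"
| "freeF (DNeg \<phi>) = freeF \<phi>"
| "freeF (DConj \<phi> \<psi>) = freeF \<phi> \<union> freeF \<psi>"
| "freeF (DAll x \<phi>) = freeF \<phi> - {x}"
| "freeF (DK t \<phi>) = varsT t \<union> freeF \<phi>"

primrec maxvarF :: "('f, 'r) dfm \<Rightarrow> nat" where
  "maxvarF (DAtom r ts) = foldr max (map maxvarT ts) 0"
| "maxvarF (DEq t1 t2) = max (maxvarT t1) (maxvarT t2)"
| "maxvarF (DNeg \<phi>) = maxvarF \<phi>"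
| "maxvarF (DConj \<phi> \<psi>) = max (maxvarF \<phi>) (maxvarF \<psi>)"
| "maxvarF (DAll x \<phi>) = max x (maxvarF \<phi>)"
| "maxvarF (DK t \<phi>) = max (maxvarT t) (maxvarF \<phi>)"

definition closed_trm :: "'f trm \<Rightarrow> bool" where
  "closed_trm t \<longleftrightarrow> varsT t = {}"

definition sentence :: "('f, 'r) dfm \<Rightarrow> bool" where
  "sentence \<phi> \<longleftrightarrow> freeF \<phi> = {}"

text \<open>A structure with domain the type 'd (the fixed nonempty domain D = UNIV).\<close>
record ('f, 'r, 'd) struc =
  sfn :: "'f \<Rightarrow> 'd list \<Rightarrow> 'd"
  srl :: "'r \<Rightarrow> 'd list \<Rightarrow> bool"

datatype tv = TT | FF | UU

fun tv_neg :: "tv \<Rightarrow> tv" where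
  "tv_neg TT = FF" | "tv_neg FF = TT" | "tv_neg UU = UU"

definition tv_glb :: "tv set \<Rightarrow> tv" where
  "tv_glb V = (if FF \<in> V then FF else if UU \<in> V then UU else TT)"

definition tv_of_bool :: "bool \<Rightarrow> tv" where
  "tv_of_bool b = (if b then TT else FF)"

fun evalT :: "('f, 'r, 'd, 'z) struc_scheme \<Rightarrow> (nat \<Rightarrow> 'd) \<Rightarrow> 'f trm \<Rightarrow> 'd" where
  "evalT I a (Var n) = a n"
| "evalT I a (Fn f ts) = sfn I f (map (evalT I a) ts)"

text \<open>Io: the fixed objective structure; sf, sr: which function/relation symbols are
  subjective; agents: the set of agents; apred: the unary predicate Apred.\<close>
definition dael_setup ::
  "('f, 'r, 'd) struc \<Rightarrow> ('f \<Rightarrow> bool) \<Rightarrow> ('r \<Rightarrow> bool) \<Rightarrow> 'd set \<Rightarrow> 'r \<Rightarrow> bool" where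
  "dael_setup Io sf sr agents apred \<longleftrightarrow>
     (\<forall>A\<in>agents. \<exists>c. \<not> sf c \<and> sfn Io c [] = A) \<and>
     \<not> sr apred \<and> (\<forall>d. srl Io apred [d] \<longleftrightarrow> d \<in> agents)"

definition is_struc ::
  "('f, 'r, 'd) struc \<Rightarrow> ('f \<Rightarrow> bool) \<Rightarrow> ('r \<Rightarrow> bool) \<Rightarrow> ('f, 'r, 'd) struc \<Rightarrow> bool" where
  "is_struc Io sf sr I \<longleftrightarrow>
     (\<forall>f. \<not> sf f \<longrightarrow> sfn I f = sfn Io f) \<and> (\<forall>r. \<not> sr r \<longrightarrow> srl I r = srl Io r)"

definition is_struc' ::
  "('f, 'r, 'd) struc \<Rightarrow> ('f \<Rightarrow> bool) \<Rightarrow> ('r \<Rightarrow> bool) \<Rightarrow> 'd set \<Rightarrow> 'd \<Rightarrow> ('f, 'r, 'd) struc \<Rightarrow> bool" where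
  "is_struc' Io sf sr agents \<delta> J \<longleftrightarrow>
     is_struc Io sf sr J \<and>
     (\<forall>f ds d. sf f \<and> d \<notin> agents \<longrightarrow> sfn J f (ds @ [d]) = \<delta>) \<and>
     (\<forall>r ds d. sr r \<and> d \<notin> agents \<longrightarrow> \<not> srl J r (ds @ [d]))"

text \<open>A DPWS is a family of PWSs indexed by agents (values at non-agents are irrelevant);
  a DBP is a pair (Bc, Bl) of DPWSs.\<close>
type_synonym ('f, 'r, 'd) dpws = "'d \<Rightarrow> ('f, 'r, 'd) struc set"
type_synonym ('f, 'r, 'd) dbp = "('f, 'r, 'd) dpws \<times> ('f, 'r, 'd) dpws"

definition is_dbp ::
  "('f, 'r, 'd) struc \<Rightarrow> ('f \<Rightarrow> bool) \<Rightarrow> ('r \<Rightarrow> bool) \<Rightarrow> 'd set \<Rightarrow> ('f, 'r, 'd) dbp \<Rightarrow> bool" where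
  "is_dbp Io sf sr agents B \<longleftrightarrow>
     (\<forall>A\<in>agents. \<forall>I \<in> fst B A \<union> snd B A. is_struc Io sf sr I)"

definition consistent_dbp :: "'d set \<Rightarrow> ('f, 'r, 'd) dbp \<Rightarrow> bool" where
  "consistent_dbp agents B \<longleftrightarrow> (\<forall>A\<in>agents. snd B A \<subseteq> fst B A)"

definition univ_consistent_dbp :: "'d set \<Rightarrow> ('f, 'r, 'd) dbp \<Rightarrow> bool" where
  "univ_consistent_dbp agents B \<longleftrightarrow> (\<forall>A\<in>agents. snd B A \<noteq> {})"

primrec dval ::
  "'d set \<Rightarrow> ('f, 'r) dfm \<Rightarrow> ('f, 'r, 'd) dbp \<Rightarrow> ('f, 'r, 'd) struc \<Rightarrow> (nat \<Rightarrow> 'd) \<Rightarrow> tv" where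
  "dval agents (DAtom r ts) B I a = tv_of_bool (srl I r (map (evalT I a) ts))"
| "dval agents (DEq t1 t2) B I a = tv_of_bool (evalT I a t1 = evalT I a t2)"
| "dval agents (DNeg \<phi>) B I a = tv_neg (dval agents \<phi> B I a)"
| "dval agents (DConj \<phi> \<psi>) B I a = tv_glb {dval agents \<phi> B I a, dval agents \<psi> B I a}"
| "dval agents (DAll x \<phi>) B I a = tv_glb (range (\<lambda>d. dval agents \<phi> B I (a(x := d))))"
| "dval agents (DK t \<phi>) B I a =
     (let A = evalT I a t in
      if A \<in> agents \<and> (\<forall>J \<in> fst B A. dval agents \<phi> B J a = TT) then TT
      else if A \<notin> agents \<or> (\<exists>J \<in> snd B A. dval agents \<phi> B J a = FF) then FF
      else UU)"

primrec aval ::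
  "('f, 'r) afm \<Rightarrow> ('f, 'r, 'd) struc set \<times> ('f, 'r, 'd) struc set \<Rightarrow> ('f, 'r, 'd) struc \<Rightarrow> (nat \<Rightarrow> 'd) \<Rightarrow> tv" where
  "aval (AAtom r ts) PS J a = tv_of_bool (srl J r (map (evalT J a) ts))"
| "aval (AEq t1 t2) PS J a = tv_of_bool (evalT J a t1 = evalT J a t2)"
| "aval (ANeg \<phi>) PS J a = tv_neg (aval \<phi> PS J a)"
| "aval (AConj \<phi> \<psi>) PS J a = tv_glb {aval \<phi> PS J a, aval \<psi> PS J a}"
| "aval (AAll x \<phi>) PS J a = tv_glb (range (\<lambda>d. aval \<phi> PS J (a(x := d))))"
| "aval (AK \<phi>) PS J a =
     (if \<forall>J' \<in> fst PS. aval \<phi> PS J' a = TT then TT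
      else if \<exists>J' \<in> snd PS. aval \<phi> PS J' a = FF then FF
      else UU)"

fun tr_trm :: "('f \<Rightarrow> bool) \<Rightarrow> 'f trm \<Rightarrow> 'f trm \<Rightarrow> 'f trm" where
  "tr_trm sf s (Var x) = Var x"
| "tr_trm sf s (Fn f ts) =
     (if sf f then Fn f (map (tr_trm sf s) ts @ [s]) else Fn f (map (tr_trm sf s) ts))"

definition fresh_var :: "'f trm \<Rightarrow> 'f trm \<Rightarrow> ('f, 'r) dfm \<Rightarrow> nat" where
  "fresh_var s t \<phi> = Suc (max (maxvarT s) (max (maxvarT t) (maxvarF \<phi>)))"

primrec tr_formula ::
  "('f \<Rightarrow> bool) \<Rightarrow> ('r \<Rightarrow> bool) \<Rightarrow> 'r \<Rightarrow> 'f trm \<Rightarrow> ('f, 'r) dfm \<Rightarrow> ('f, 'r) afm" where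
  "tr_formula sf sr apred s (DAtom r ts) =
     (if sr r then AAtom r (map (tr_trm sf s) ts @ [s]) else AAtom r (map (tr_trm sf s) ts))"
| "tr_formula sf sr apred s (DEq t1 t2) = AEq (tr_trm sf s t1) (tr_trm sf s t2)"
| "tr_formula sf sr apred s (DNeg \<phi>) = ANeg (tr_formula sf sr apred s \<phi>)"
| "tr_formula sf sr apred s (DConj \<phi> \<psi>) =
     AConj (tr_formula sf sr apred s \<phi>) (tr_formula sf sr apred s \<psi>)"
| "tr_formula sf sr apred s (DAll x \<phi>) = AAll x (tr_formula sf sr apred s \<phi>)"
| "tr_formula sf sr apred s (DK t \<phi>) =
     (let x = fresh_var s t \<phi> in
      AEx x (AConj (AEq (Var x) (tr_trm sf s t))
                   (AConj (AAtom apred [Var x]) (AK (tr_formula sf sr apred (Var x) \<phi>)))))"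

definition tr_structure ::
  "('f, 'r, 'd) struc \<Rightarrow> ('f \<Rightarrow> bool) \<Rightarrow> ('r \<Rightarrow> bool) \<Rightarrow> 'd set \<Rightarrow> 'd \<Rightarrow>
   ('d \<Rightarrow> ('f, 'r, 'd) struc) \<Rightarrow> ('f, 'r, 'd) struc" where
  "tr_structure Io sf sr agents \<delta> I =
     \<lparr> sfn = (\<lambda>f ds. if sf f then
                        (if ds \<noteq> [] \<and> last ds \<in> agents then sfn (I (last ds)) f (butlast ds) else \<delta>)
                      else sfn Io f ds),
       srl = (\<lambda>r ds. if sr r then
                        ds \<noteq> [] \<and> last ds \<in> agents \<and> srl (I (last ds)) r (butlast ds)
                      else srl Io r ds) \<rparr>"

definition tr_pws ::
  "('f, 'r, 'd) struc \<Rightarrow> ('f \<Rightarrow> bool) \<Rightarrow> ('r \<Rightarrow> bool) \<Rightarrow> 'd set \<Rightarrow> 'd \<Rightarrow>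
   ('f, 'r, 'd) dpws \<Rightarrow> ('f, 'r, 'd) struc set" where
  "tr_pws Io sf sr agents \<delta> Q =
     {tr_structure Io sf sr agents \<delta> I | I. \<forall>A\<in>agents. I A \<in> Q A}"

definition tr_beliefpair ::
  "('f, 'r, 'd) struc \<Rightarrow> ('f \<Rightarrow> bool) \<Rightarrow> ('r \<Rightarrow> bool) \<Rightarrow> 'd set \<Rightarrow> 'd \<Rightarrow>
   ('f, 'r, 'd) dbp \<Rightarrow> ('f, 'r, 'd) struc set \<times> ('f, 'r, 'd) struc set" where
  "tr_beliefpair Io sf sr agents \<delta> B =
     (tr_pws Io sf sr agents \<delta> (fst B), tr_pws Io sf sr agents \<delta> (snd B))"

text \<open>J_t for a Sigma'-structure J and a closed Sigma'-term t (the assignment used to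
  evaluate t is irrelevant since t is closed; we use the constant assignment delta).\<close>
definition restrict_struc ::
  "('f \<Rightarrow> bool) \<Rightarrow> ('r \<Rightarrow> bool) \<Rightarrow> 'd \<Rightarrow> ('f, 'r, 'd) struc \<Rightarrow> 'f trm \<Rightarrow> ('f, 'r, 'd) struc" where
  "restrict_struc sf sr \<delta> J t =
     (let d = evalT J (\<lambda>_. \<delta>) t in
      \<lparr> sfn = (\<lambda>f ds. if sf f then sfn J f (ds @ [d]) else sfn J f ds),
        srl = (\<lambda>r ds. if sr r then srl J r (ds @ [d]) else srl J r ds) \<rparr>)"

end

theory Submission
  imports Defs
begin

definition rs :: "('f \<Rightarrow> bool) \<Rightarrow> ('r \<Rightarrow> bool) \<Rightarrow> ('f, 'r, 'd) struc \<Rightarrow> 'd \<Rightarrow> ('f, 'r, 'd) struc" where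
  "rs sf sr J e = \<lparr> sfn = (\<lambda>f ds. if sf f then sfn J f (ds @ [e]) else sfn J f ds),
        srl = (\<lambda>r ds. if sr r then srl J r (ds @ [e]) else srl J r ds) \<rparr>"

lemma rs_sfn[simp]: "sfn (rs sf sr J e) f ds = (if sf f then sfn J f (ds @ [e]) else sfn J f ds)"
  by (simp add: rs_def)
lemma rs_srl[simp]: "srl (rs sf sr J e) r ds = (if sr r then srl J r (ds @ [e]) else srl J r ds)"
  by (simp add: rs_def)

lemma eval_tr: "evalT J a (tr_trm sf s u) = evalT (rs sf sr J (evalT J a s)) a u"
proof (induction u)
  case (Fn f ts)
  then have "map (\<lambda>x. evalT J a (tr_trm sf s x)) ts = map (evalT (rs sf sr J (evalT J a s)) a) ts"
    by auto
  then show ?case by (simp add: comp_def del: map_eq_conv)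
qed simp

lemma eval_agree: "(\<forall>v\<in>varsT u. a v = b v) \<Longrightarrow> evalT I a u = evalT I b u"
proof (induction u)
  case (Fn f ts)
  then have "map (evalT I a) ts = map (evalT I b) ts" by auto
  then show ?case by (simp del: map_eq_conv)
qed simp

lemma foldr_max_ge: "x \<in> set xs \<Longrightarrow> (x::nat) \<le> foldr max xs 0"
  by (induction xs) auto

lemma maxvarT_ge: "v \<in> varsT u \<Longrightarrow> v \<le> maxvarT u"
proof (induction u)
  case (Var x) then show ?case by simp
next
  case (Fn f ts)
  then obtain u where u: "u \<in> set ts" "v \<in> varsT u" by auto
  then have "v \<le> maxvarT u" using Fn by auto
  also have "\<dots> \<le> foldr max (map maxvarT ts) 0" using u by (intro foldr_max_ge) auto
  finally show ?case by simp
qed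

lemma varsT_tr: "varsT (tr_trm sf s u) \<subseteq> varsT s \<union> varsT u"
  by (induction u) auto

lemma freeF_le: "v \<in> freeF \<phi> \<Longrightarrow> v \<le> maxvarF \<phi>"
proof (induction \<phi>)
  case (DAtom r ts)
  then obtain u where u: "u \<in> set ts" "v \<in> varsT u" by auto
  then have "v \<le> maxvarT u" by (simp add: maxvarT_ge)
  also have "\<dots> \<le> foldr max (map maxvarT ts) 0" using u by (intro foldr_max_ge) auto
  finally show ?case by simp
qed (auto dest: maxvarT_ge)

lemma dval_agree: "(\<forall>v\<in>freeF \<phi>. a v = b v) \<Longrightarrow> dval ag \<phi> B I a = dval ag \<phi> B I b"
proof (induction \<phi> arbitrary: I a b)
  case (DAtom r ts)
  then have "map (evalT I a) ts = map (evalT I b) ts"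
    by (auto intro!: eval_agree)
  then show ?case by (simp del: map_eq_conv)
next
  case (DEq t1 t2) then show ?case using eval_agree[of t1 a b I] eval_agree[of t2 a b I] by simp
next
  case (DAll x \<phi>)
  have "\<And>d. dval ag \<phi> B I (a(x := d)) = dval ag \<phi> B I (b(x := d))"
    using DAll by (intro DAll.IH) auto
  then show ?case by simp
next
  case (DK t \<phi>)
  have e: "evalT I a t = evalT I b t" using DK by (intro eval_agree) auto
  have "\<And>J. dval ag \<phi> B J a = dval ag \<phi> B J b" using DK by (intro DK.IH) auto
  then show ?case using e by (simp add: Let_def)
next
  case (DNeg \<phi>) then show ?case by (metis dval.simps(3) freeF.simps(3))
next
  case (DConj \<phi>1 \<phi>2)
  have "dval ag \<phi>1 B I a = dval ag \<phi>1 B I b" "dval ag \<phi>2 B I a = dval ag \<phi>2 B I b"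
    using DConj.prems by (auto intro!: DConj.IH)
  then show ?case by simp
qed

lemma glb_range_single: "(\<forall>d. d \<noteq> e \<longrightarrow> f d = TT) \<Longrightarrow> tv_glb (range f) = f e"
proof -
  assume h: "\<forall>d. d \<noteq> e \<longrightarrow> f d = TT"
  have r: "v \<in> range f \<longleftrightarrow> v = f e \<or> (v = TT \<and> (\<exists>d. d \<noteq> e))" for v
    using h by (auto simp: image_iff) metis+
  show ?thesis unfolding tv_glb_def r by (cases "f e") auto
qed

lemma rs_tr:
  assumes "A \<in> agents" "is_struc Io sf sr (I A)"
  shows "rs sf sr (tr_structure Io sf sr agents \<delta> I) A = I A"
  using assms by (auto simp: rs_def tr_structure_def is_struc_def fun_eq_iff)

lemma img:
  assumes "\<forall>A\<in>agents. Q A \<noteq> {}" "\<forall>A\<in>agents. \<forall>I\<in>Q A. is_struc Io sf sr I" "A \<in> agents"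
  shows "(\<lambda>J'. rs sf sr J' A) ` tr_pws Io sf sr agents \<delta> Q = Q A"
proof
  show "(\<lambda>J'. rs sf sr J' A) ` tr_pws Io sf sr agents \<delta> Q \<subseteq> Q A"
    using assms by (auto simp: tr_pws_def rs_tr)
next
  show "Q A \<subseteq> (\<lambda>J'. rs sf sr J' A) ` tr_pws Io sf sr agents \<delta> Q"
  proof
    fix K assume K: "K \<in> Q A"
    define I where "I = (\<lambda>B. if B = A then K else SOME x. x \<in> Q B)"
    have I: "\<forall>B\<in>agents. I B \<in> Q B" using assms(1) K unfolding I_def by (auto intro: some_in_eq[THEN iffD2])
    have "tr_structure Io sf sr agents \<delta> I \<in> tr_pws Io sf sr agents \<delta> Q"
      using I unfolding tr_pws_def by auto
    moreover have "rs sf sr (tr_structure Io sf sr agents \<delta> I) A = K"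
      using rs_tr[of A agents Io sf sr I] assms K by (simp add: I_def)
    ultimately show "K \<in> (\<lambda>J'. rs sf sr J' A) ` tr_pws Io sf sr agents \<delta> Q" by force
  qed
qed

lemma aex_single:
  assumes "\<forall>d. d \<noteq> e \<longrightarrow> aval \<psi> PS J (a(x := d)) = FF"
  shows "aval (AEx x \<psi>) PS J a = aval \<psi> PS J (a(x := e))"
proof -
  have "tv_glb (range (\<lambda>d. tv_neg (aval \<psi> PS J (a(x := d))))) = tv_neg (aval \<psi> PS J (a(x := e)))"
    using assms by (intro glb_range_single) auto
  then show ?thesis unfolding AEx_def by (cases "aval \<psi> PS J (a(x := e))") auto
qed

lemma tr_srl_apred:
  assumes "dael_setup Io sf sr agents apred"
  shows "srl (tr_structure Io sf sr agents \<delta> I) apred [d] \<longleftrightarrow> d \<in> agents"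
  using assms by (auto simp: dael_setup_def tr_structure_def)

lemma main_gen:
  assumes hsetup: "dael_setup Io sf sr agents apred"
    and dbp: "is_dbp Io sf sr agents B"
    and cons: "consistent_dbp agents B"
    and univ: "univ_consistent_dbp agents B"
  shows "(\<forall>v\<in>varsT s. maxvarF \<phi> < v) \<Longrightarrow> (\<forall>d. srl J apred [d] \<longleftrightarrow> d \<in> agents) \<Longrightarrow>
    aval (tr_formula sf sr apred s \<phi>) (tr_beliefpair Io sf sr agents \<delta> B) J a
      = dval agents \<phi> B (rs sf sr J (evalT J a s)) a"
proof (induction \<phi> arbitrary: s J a)
  case (DAtom r ts)
  have "map (\<lambda>x. evalT J a (tr_trm sf s x)) ts = map (evalT (rs sf sr J (evalT J a s)) a) ts"
    by (simp add: eval_tr[where sr=sr])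
  then show ?case by (simp add: comp_def del: map_eq_conv)
next
  case (DEq t1 t2)
  then show ?case by (simp add: eval_tr[where sr=sr])
next
  case (DNeg \<phi>)
  then show ?case by simp
next
  case (DConj \<phi>1 \<phi>2)
  have "aval (tr_formula sf sr apred s \<phi>1) (tr_beliefpair Io sf sr agents \<delta> B) J a
      = dval agents \<phi>1 B (rs sf sr J (evalT J a s)) a"
    using DConj.prems by (intro DConj.IH) auto
  moreover have "aval (tr_formula sf sr apred s \<phi>2) (tr_beliefpair Io sf sr agents \<delta> B) J a
      = dval agents \<phi>2 B (rs sf sr J (evalT J a s)) a"
    using DConj.prems by (intro DConj.IH) auto
  ultimately show ?case by simp
next
  case (DAll x \<phi>)
  have xs: "x \<notin> varsT s" using DAll.prems(1) by force
  have "\<And>d. aval (tr_formula sf sr apred s \<phi>) (tr_beliefpair Io sf sr agents \<delta> B) J (a(x:=d))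
      = dval agents \<phi> B (rs sf sr J (evalT J a s)) (a(x:=d))"
  proof -
    fix d
    have "evalT J (a(x:=d)) s = evalT J a s" using xs by (intro eval_agree) auto
    then show "aval (tr_formula sf sr apred s \<phi>) (tr_beliefpair Io sf sr agents \<delta> B) J (a(x:=d))
      = dval agents \<phi> B (rs sf sr J (evalT J a s)) (a(x:=d))"
      using DAll.prems by (subst DAll.IH) auto
  qed
  then show ?case by simp
next
  case (DK t \<phi>)
  define x where "x = fresh_var s t \<phi>"
  define TB where "TB = tr_beliefpair Io sf sr agents \<delta> B"
  define e where "e = evalT J a s"
  define A where "A = evalT (rs sf sr J e) a t"
  have A': "A = evalT J a (tr_trm sf s t)" unfolding A_def e_def by (simp add: eval_tr[where sr=sr])
  have xnot: "x \<notin> varsT (tr_trm sf s t)"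
    using varsT_tr[of sf s t] maxvarT_ge[of x s] maxvarT_ge[of x t]
    unfolding x_def fresh_var_def by auto
  have evx: "evalT J (a(x:=d)) (tr_trm sf s t) = A" for d
    unfolding A' using xnot by (intro eval_agree) auto
  define Kv where "Kv d = aval (AK (tr_formula sf sr apred (Var x) \<phi>)) TB J (a(x:=d))" for d
  define \<psi> where "\<psi> = AConj (AEq (Var x) (tr_trm sf s t))
                   (AConj (AAtom apred [Var x]) (AK (tr_formula sf sr apred (Var x) \<phi>)))"
  have tr: "tr_formula sf sr apred s (DK t \<phi>) = AEx x \<psi>"
    unfolding x_def \<psi>_def by (simp add: Let_def)
  have nsr: "\<not> sr apred" using hsetup by (simp add: dael_setup_def)
  have psi: "aval \<psi> TB J (a(x:=d)) = tv_glb {tv_of_bool (d = A), tv_glb {tv_of_bool (d \<in> agents), Kv d}}" for d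
    unfolding \<psi>_def Kv_def using evx[of d] DK.prems(2) nsr by (simp del: aval.simps(6))
  have "aval (AEx x \<psi>) TB J a = aval \<psi> TB J (a(x:=A))"
    by (rule aex_single) (auto simp: psi tv_of_bool_def tv_glb_def)
  also have "\<dots> = (if A \<in> agents then Kv A else FF)"
    by (cases "Kv A") (auto simp: psi tv_of_bool_def tv_glb_def)
  finally have lhs: "aval (AEx x \<psi>) TB J a = (if A \<in> agents then Kv A else FF)" .
  have xphi: "maxvarF \<phi> < x" unfolding x_def fresh_var_def by auto
  have inner: "aval (tr_formula sf sr apred (Var x) \<phi>) TB J' (a(x:=A)) = dval agents \<phi> B (rs sf sr J' A) a"
    if J'in: "J' \<in> fst TB \<union> snd TB" for J'
  proof -
    obtain I where J': "J' = tr_structure Io sf sr agents \<delta> I"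
      using J'in unfolding TB_def tr_beliefpair_def tr_pws_def by (auto simp: tr_pws_def)
    have "aval (tr_formula sf sr apred (Var x) \<phi>) TB J' (a(x:=A)) = dval agents \<phi> B (rs sf sr J' A) (a(x:=A))"
      unfolding TB_def using xphi tr_srl_apred[OF hsetup] J' by (subst DK.IH) auto
    also have "\<dots> = dval agents \<phi> B (rs sf sr J' A) a"
      using freeF_le[of _ \<phi>] xphi by (intro dval_agree) (auto dest: leD)
    finally show ?thesis .
  qed
  have ne: "\<forall>A\<in>agents. snd B A \<noteq> {}" using univ by (simp add: univ_consistent_dbp_def)
  have ne2: "\<forall>A\<in>agents. fst B A \<noteq> {}" using univ cons
    by (auto simp: univ_consistent_dbp_def consistent_dbp_def)
  have st1: "\<forall>A\<in>agents. \<forall>I\<in>fst B A. is_struc Io sf sr I" using dbp by (simp add: is_dbp_def)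
  have st2: "\<forall>A\<in>agents. \<forall>I\<in>snd B A. is_struc Io sf sr I" using dbp by (simp add: is_dbp_def)
  show ?case
  proof (cases "A \<in> agents")
    case False
    then show ?thesis using lhs tr unfolding TB_def A_def e_def by (simp add: Let_def)
  next
    case True
    have i1: "(\<lambda>J'. rs sf sr J' A) ` fst TB = fst B A"
      unfolding TB_def tr_beliefpair_def using img[OF ne2 st1 True] by simp
    have i2: "(\<lambda>J'. rs sf sr J' A) ` snd TB = snd B A"
      unfolding TB_def tr_beliefpair_def using img[OF ne st2 True] by simp
    have c1: "(\<forall>J'\<in>fst TB. aval (tr_formula sf sr apred (Var x) \<phi>) TB J' (a(x:=A)) = TT)
        \<longleftrightarrow> (\<forall>K\<in>fst B A. dval agents \<phi> B K a = TT)"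
      using inner i1 by (auto, metis (no_types, lifting) imageE)
    have c2: "(\<exists>J'\<in>snd TB. aval (tr_formula sf sr apred (Var x) \<phi>) TB J' (a(x:=A)) = FF)
        \<longleftrightarrow> (\<exists>K\<in>snd B A. dval agents \<phi> B K a = FF)"
      using inner i2 by (auto, metis (no_types, lifting) imageE)
    have "Kv A = dval agents (DK t \<phi>) B (rs sf sr J e) a"
      unfolding Kv_def using c1 c2 True by (simp add: Let_def A_def)
    then show ?thesis using lhs tr True unfolding TB_def e_def by simp
  qed
qed

theorem mainTheorem10:
  fixes Io :: "('f, 'r, 'd) struc"
    and sf :: "'f \<Rightarrow> bool" and sr :: "'r \<Rightarrow> bool"
    and agents :: "'d set" and apred :: 'r and \<delta> :: 'd
    and t :: "'f trm" and \<phi> :: "('f, 'r) dfm"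
    and B :: "('f, 'r, 'd) dbp" and J :: "('f, 'r, 'd) struc"
    and a :: "nat \<Rightarrow> 'd"
  assumes "dael_setup Io sf sr agents apred"
    and "closed_trm t"
    and "sentence \<phi>"
    and "is_dbp Io sf sr agents B"
    and "consistent_dbp agents B"
    and "univ_consistent_dbp agents B"
    and "is_struc' Io sf sr agents \<delta> J"
  shows "aval (tr_formula sf sr apred t \<phi>) (tr_beliefpair Io sf sr agents \<delta> B) J a
         = dval agents \<phi> B (restrict_struc sf sr \<delta> J t) a"
proof -
  have vt: "varsT t = {}" using assms(2) by (simp add: closed_trm_def)
  have ev: "evalT J (\<lambda>_. \<delta>) t = evalT J a t" using vt by (intro eval_agree) auto
  have r: "restrict_struc sf sr \<delta> J t = rs sf sr J (evalT J a t)"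
    unfolding restrict_struc_def rs_def ev by (simp add: Let_def)
  have ap: "\<forall>d. srl J apred [d] \<longleftrightarrow> d \<in> agents"
    using assms(1,7) by (auto simp: dael_setup_def is_struc'_def is_struc_def)
  show ?thesis unfolding r
    using main_gen[OF assms(1,4,5,6)] vt ap by simp
qed

end
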